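(* For all integers $k\ge1$ and $n\ge0$, \[ ov_k(n) = nov_k(n) - nov_{2k}(n). \]
   Context: An overpartition of $n$ is a non-increasing sequence of positive integers summing to $n$ in which the first occurrence of each integer may be overlined. For $j\ge1$, $nov_j(n)$ denotes the sum of all non-overlined parts divisible by $j$, summed over all overpartitions of $n$, and $ov_j(n)$ denotes the sum of all overlined parts divisible by $j$, summed over all overpartitions of $n$. *)

theory Defs
  imports Main "HOL-Library.Multiset"
begin

text \<open>An overpartition of n is represented as a multiset of parts (j, b), where j is a
positive integer and b is True iff this copy of j is overlined. Since only the first
occurrence of each integer may be overlined, each value j has at most one overlined
copy.\<close>

definition overpartitions :: "nat \<Rightarrow> (nat \<times> bool) multiset set" where
  "overpartitions n = {P. (\<forall>p \<in># P. fst p > 0) \<and> (\<forall>j. count P (j, True) \<le> 1)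
                          \<and> (\<Sum>p \<in># P. fst p) = n}"

definition nov :: "nat \<Rightarrow> nat \<Rightarrow> nat" where
  "nov j n = (\<Sum>P \<in> overpartitions n. \<Sum>p \<in># filter_mset (\<lambda>p. \<not> snd p \<and> j dvd fst p) P. fst p)"

definition ov :: "nat \<Rightarrow> nat \<Rightarrow> nat" where
  "ov j n = (\<Sum>P \<in> overpartitions n. \<Sum>p \<in># filter_mset (\<lambda>p. snd p \<and> j dvd fst p) P. fst p)"

end

theory Submission
  imports Defs
begin

definition sig :: "nat \<Rightarrow> (nat \<times> bool) multiset \<Rightarrow> (nat \<times> bool) multiset" where
  "sig m P = filter_mset (\<lambda>p. p \<noteq> (m,False) \<and> p \<noteq> (m,True) \<and> p \<noteq> (2*m,False)) P
     + replicate_mset (count P (m,True) + 2 * count P (2*m,False)) (m,False)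
     + replicate_mset (count P (m,False) mod 2) (m,True)
     + replicate_mset (count P (m,False) div 2) (2*m,False)"

lemma count_sig:
  assumes "m > 0"
  shows "count (sig m P) x = (if x = (m,False) then count P (m,True) + 2 * count P (2*m,False)
     else if x = (m,True) then count P (m,False) mod 2
     else if x = (2*m,False) then count P (m,False) div 2 else count P x)"
  using assms by (auto simp: sig_def)

lemma sig_sig:
  assumes "m > 0" "count P (m,True) \<le> 1"
  shows "sig m (sig m P) = P"
  unfolding multiset_eq_iff using assms by (auto simp: count_sig)

lemma decomp:
  fixes m :: nat
  assumes "m > 0"
  shows "P = filter_mset (\<lambda>p. p \<noteq> (m,False) \<and> p \<noteq> (m,True) \<and> p \<noteq> (2*m,False)) P
     + replicate_mset (count P (m,False)) (m,False)
     + replicate_mset (count P (m,True)) (m,True)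
     + replicate_mset (count P (2*m,False)) (2*m,False)"
  unfolding multiset_eq_iff using assms by auto

lemma sum_sig:
  assumes "m > 0"
  shows "(\<Sum>p\<in>#sig m P. fst p) = (\<Sum>p\<in>#P. fst p)"
proof -
  let ?R = "filter_mset (\<lambda>p. p \<noteq> (m,False) \<and> p \<noteq> (m,True) \<and> p \<noteq> (2*m,False)) P"
  have "(\<Sum>p\<in>#P. fst p) = (\<Sum>p\<in>#?R. fst p) + count P (m,False) * m + count P (m,True) * m
     + count P (2*m,False) * (2*m)"
    by (subst decomp[OF assms]) simp
  moreover have "(\<Sum>p\<in>#sig m P. fst p) = (\<Sum>p\<in>#?R. fst p)
     + (count P (m,True) + 2 * count P (2*m,False)) * m + (count P (m,False) mod 2) * m
     + (count P (m,False) div 2) * (2*m)"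
    by (simp add: sig_def)
  moreover have "(e + 2*b)*m + (a mod 2)*m + (a div 2)*(2*m) = a*m + e*m + b*(2*m)" for a b e :: nat
  proof -
    have "(a mod 2)*m + (a div 2)*(2*m) = (a mod 2 + 2*(a div 2))*m" by algebra
    also have "\<dots> = a*m" by (simp only: mod_mult_div_eq)
    finally show ?thesis by (simp add: algebra_simps)
  qed
  ultimately show ?thesis by (simp only: add.assoc)
qed

lemma sig_op:
  assumes "m > 0" "P \<in> overpartitions n"
  shows "sig m P \<in> overpartitions n"
proof -
  have "\<forall>p\<in>#sig m P. fst p > 0"
  proof
    fix p assume "p \<in># sig m P"
    then have "count (sig m P) p > 0" by simp
    then show "fst p > 0" using assms unfolding overpartitions_def
      by (auto simp: count_sig[OF assms(1)] split: if_splits)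
  qed
  moreover have "\<forall>j. count (sig m P) (j, True) \<le> 1"
    using assms unfolding overpartitions_def by (auto simp: count_sig[OF assms(1)])
  ultimately show ?thesis using assms sum_sig[OF assms(1), of P] unfolding overpartitions_def by auto
qed

lemma keyL:
  assumes "m > 0"
  shows "(\<Sum>P\<in>overpartitions n. int (count P (m,True)) + 2 * int (count P (2*m,False))
           - int (count P (m,False))) = 0"
proof -
  define N where "N P = int (count P (m,True)) + 2 * int (count P (2*m,False)) - int (count P (m,False))" for P
  have bij: "bij_betw (sig m) (overpartitions n) (overpartitions n)"
    by (rule bij_betw_byWitness[where f'="sig m"])
       (use assms sig_op sig_sig in \<open>auto simp: overpartitions_def\<close>)
  have neg: "N (sig m P) = - N P" if "P \<in> overpartitions n" for P
  proof -
    have "int (count P (m,False) mod 2) + 2 * int (count P (m,False) div 2) = int (count P (m,False))"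
      by (metis mod_mult_div_eq of_nat_add of_nat_mult of_nat_numeral mult.commute)
    then show ?thesis unfolding N_def count_sig[OF assms] using assms by auto
  qed
  have "sum N (overpartitions n) = sum (N \<circ> sig m) (overpartitions n)"
    using sum.reindex_bij_betw[OF bij, of N] by simp
  also have "\<dots> = sum (\<lambda>P. - N P) (overpartitions n)"
    by (rule sum.cong) (auto simp: neg)
  also have "\<dots> = - sum N (overpartitions n)" by (simp add: sum_negf)
  finally have "sum N (overpartitions n) = 0" by simp
  then show ?thesis unfolding N_def .
qed

lemma sum_count:
  fixes g :: "'a \<Rightarrow> nat"
  assumes "finite S" "set_mset P \<subseteq> S"
  shows "(\<Sum>p\<in>#P. g p) = (\<Sum>x\<in>S. count P x * g x)"
  using assms(2)
proof (induction P)
  case empty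
  then show ?case by simp
next
  case (add x P)
  have "(\<Sum>y\<in>S. count (add_mset x P) y * g y) = (\<Sum>y\<in>S. count P y * g y + (if y = x then g y else 0))"
    by (rule sum.cong) auto
  also have "\<dots> = (\<Sum>y\<in>S. count P y * g y) + g x"
    using add.prems assms(1) by (simp add: sum.distrib)
  finally show ?case using add by simp
qed

lemma part_le:
  assumes "P \<in> overpartitions n" "p \<in># P"
  shows "fst p \<le> n"
proof -
  obtain P' where "P = add_mset p P'" using assms(2) by (metis multi_member_split)
  then show ?thesis using assms(1) unfolding overpartitions_def by auto
qed

lemma expand:
  assumes "P \<in> overpartitions n" "n \<le> N"
  shows "(\<Sum>p\<in># filter_mset Q P. fst p) = (\<Sum>m\<in>{1..N}. (if Q (m,True) then count P (m,True) * m else 0)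
      + (if Q (m,False) then count P (m,False) * m else 0))"
proof -
  have sub: "set_mset (filter_mset Q P) \<subseteq> {1..N} \<times> UNIV"
  proof
    fix p assume "p \<in> set_mset (filter_mset Q P)"
    then have "p \<in># P" by simp
    then have "fst p \<le> n" "fst p > 0" using part_le[OF assms(1)] assms(1)
      unfolding overpartitions_def by auto
    then show "p \<in> {1..N} \<times> UNIV" using assms(2) by (cases p) auto
  qed
  have "(\<Sum>p\<in># filter_mset Q P. fst p) = (\<Sum>x\<in>{1..N} \<times> UNIV. count (filter_mset Q P) x * fst x)"
    by (rule sum_count[OF _ sub]) simp
  also have "\<dots> = (\<Sum>m\<in>{1..N}. \<Sum>b\<in>UNIV. count (filter_mset Q P) (m,b) * m)"
    by (subst sum.cartesian_product) (rule sum.cong, auto)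
  also have "\<dots> = (\<Sum>m\<in>{1..N}. (if Q (m,True) then count P (m,True) * m else 0)
      + (if Q (m,False) then count P (m,False) * m else 0))"
    by (rule sum.cong) (auto simp: UNIV_bool)
  finally show ?thesis .
qed

theorem mainTheorem3:
  fixes k n :: nat
  assumes "k \<ge> 1"
  shows "int (ov k n) = int (nov k n) - int (nov (2 * k) n)"
proof -
  define OP where "OP = overpartitions n"
  define X where "X m = (\<Sum>P\<in>OP. int (count P (m,False)))" for m
  define Y where "Y m = (\<Sum>P\<in>OP. int (count P (m,True)))" for m
  have XY: "Y m = X m - 2 * X (2*m)" if "m > 0" for m
  proof -
    have "(\<Sum>P\<in>OP. int (count P (m,True)) + 2 * int (count P (2*m,False)) - int (count P (m,False))) = 0"
      using keyL[OF that] unfolding OP_def .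
    then show ?thesis unfolding X_def Y_def
      by (simp add: sum.distrib sum_subtractf sum_distrib_left)
  qed
  have nov_eq: "int (nov j n) = (\<Sum>m\<in>{1..N}. if j dvd m then int m * X m else 0)" if "n \<le> N" for j N
  proof -
    have "int (nov j n) = (\<Sum>P\<in>OP. \<Sum>m\<in>{1..N}. if j dvd m then int m * int (count P (m,False)) else 0)"
      unfolding nov_def OP_def of_nat_sum
      proof (rule sum.cong[OF refl])
        fix P assume P: "P \<in> overpartitions n"
        show "int (\<Sum>p\<in>#filter_mset (\<lambda>p. \<not> snd p \<and> j dvd fst p) P. fst p) =
          (\<Sum>m\<in>{1..N}. if j dvd m then int m * int (count P (m,False)) else 0)"
          by (subst expand[OF P that], unfold of_nat_sum, rule sum.cong) auto
      qed
    also have "\<dots> = (\<Sum>m\<in>{1..N}. if j dvd m then int m * X m else 0)"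
      unfolding X_def by (subst sum.swap, rule sum.cong[OF refl], simp add: sum_distrib_left)
    finally show ?thesis .
  qed
  have ov_eq: "int (ov k n) = (\<Sum>m\<in>{1..n}. if k dvd m then int m * Y m else 0)"
  proof -
    have "int (ov k n) = (\<Sum>P\<in>OP. \<Sum>m\<in>{1..n}. if k dvd m then int m * int (count P (m,True)) else 0)"
      unfolding ov_def OP_def of_nat_sum
      proof (rule sum.cong[OF refl])
        fix P assume P: "P \<in> overpartitions n"
        show "int (\<Sum>p\<in>#filter_mset (\<lambda>p.  snd p \<and> k dvd fst p) P. fst p) =
          (\<Sum>m\<in>{1..n}. if k dvd m then int m * int (count P (m,True)) else 0)"
          by (subst expand[OF P order_refl], unfold of_nat_sum, rule sum.cong) auto
      qed
    also have "\<dots> = (\<Sum>m\<in>{1..n}. if k dvd m then int m * Y m else 0)"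
      unfolding Y_def by (subst sum.swap, rule sum.cong[OF refl], simp add: sum_distrib_left)
    finally show ?thesis .
  qed
  have "int (ov k n) = (\<Sum>m\<in>{1..n}. (if k dvd m then int m * X m else 0) - (if k dvd m then int (2*m) * X (2*m) else 0))"
    unfolding ov_eq
  proof (rule sum.cong[OF refl])
    fix m assume "m \<in> {1..n}"
    then have "m > 0" by simp
    then show "(if k dvd m then int m * Y m else 0) = (if k dvd m then int m * X m else 0) - (if k dvd m then int (2*m) * X (2*m) else 0)"
      by (simp add: XY right_diff_distrib)
  qed
  also have "\<dots> = int (nov k n) - (\<Sum>m\<in>{1..n}. if k dvd m then int (2*m) * X (2*m) else 0)"
    by (simp only: sum_subtractf nov_eq[OF order_refl])
  also have "(\<Sum>m\<in>{1..n}. if k dvd m then int (2*m) * X (2*m) else 0) = int (nov (2*k) n)"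
  proof -
    define h where "h m = (if 2*k dvd m then int m * X m else 0)" for m
    have "int (nov (2*k) n) = sum h {1..2*n}" unfolding h_def by (rule nov_eq) simp
    also have "\<dots> = sum h ((\<lambda>i. 2*i) ` {1..n})"
    proof (rule sum.mono_neutral_right)
      show "(\<lambda>i. 2*i) ` {1..n} \<subseteq> {1..2*n}" by auto
      show "\<forall>i\<in>{1..2*n} - (\<lambda>i. 2*i) ` {1..n}. h i = 0"
      proof
        fix i assume i: "i \<in> {1..2*n} - (\<lambda>i. 2*i) ` {1..n}"
        have "\<not> even i"
        proof
          assume "even i" then obtain j where "i = 2*j" by blast
          then show False using i by auto
        qed
        then show "h i = 0" unfolding h_def by auto
      qed
    qed simp
    also have "\<dots> = (\<Sum>i\<in>{1..n}. h (2*i))"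
      by (subst sum.reindex) (auto simp: inj_on_def)
    also have "\<dots> = (\<Sum>m\<in>{1..n}. if k dvd m then int (2*m) * X (2*m) else 0)"
      unfolding h_def by (rule sum.cong) auto
    finally show ?thesis by simp
  qed
  finally show ?thesis .
qed

end
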